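(* Let $I\subseteq R$ be a good ideal. For each $i\in\{1,\dots,n\}$ let $e_i$ be the $i$-th standard unit vector of $\mathbb N^n$ and let $q_i$ be the smallest nonnegative integer such that $I_{te_i}=I_{q_ie_i}$ for all integers $t\ge q_i$ (such $q_i$ exists). Then the Ratliff--Rush closure of $I$ is $$\tilde I=I_{q_1,0,\dots,0}\cap I_{0,q_2,0,\dots,0}\cap\cdots\cap I_{0,\dots,0,q_n}.$$
   Context: Let $\mathbb K$ be a field, $R=\mathbb K[x_1,\dots,x_n]$, $\mathfrak m=\langle x_1,\dots,x_n\rangle$, $\mathbb N=\{0,1,2,\dots\}$. A monomial $x_1^{\alpha_1}\cdots x_n^{\alpha_n}$ is identified with the point $(\alpha_1,\dots,\alpha_n)\in\mathbb N^n$. For a monomial ideal $I$, $G(I)$ denotes its (unique) minimal monomial generating set. If $I$ is an $\mathfrak m$-primary monomial ideal, then for each $i$ there is a unique $d_i\ge1$ with $x_i^{d_i}\in G(I)$; write $\mu_i=x_i^{d_i}$. For $(a_1,\dots,a_n)\in\mathbb N^n$ the box associated to $I$ is $B_{a_1,\dots,a_n}=([a_1d_1,(a_1+1)d_1]\times\cdots\times[a_nd_n,(a_n+1)d_n])\cap\mathbb N^n$; a monomial belongs to a box if its exponent vector does. An $\mathfrak m$-primary monomial ideal $I$ is called good if for every integer $l\ge1$, every element of $G(I^l)$ belongs to some box $B_{a_1,\dots,a_n}$ with $a_1+\dots+a_n=l-1$. For a good ideal $I$ and $a=(a_1,\dots,a_n)\in\mathbb N^n$, with $l=a_1+\dots+a_n+1$,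 define $I_{a}=I_{a_1,\dots,a_n}=\left\langle \frac{m}{\mu_1^{a_1}\cdots\mu_n^{a_n}} : m\in B_{a_1,\dots,a_n}\cap G(I^l)\right\rangle$. The Ratliff--Rush closure of a regular ideal $I$ is $\tilde I=\bigcup_{k\ge0}(I^{k+1}:I^k)$. *)

theory Defs
  imports Main "HOL-Library.Poly_Mapping"
begin

text \<open>Polynomial ring K[x_i : i in 'n] over a field, 'n a finite type of variables
  (n = CARD of the variable type); exponents are finitely supported maps.\<close>

type_synonym ('n, 'k) mpoly = "('n \<Rightarrow>\<^sub>0 nat) \<Rightarrow>\<^sub>0 'k"

definition monom :: "('n \<Rightarrow>\<^sub>0 nat) \<Rightarrow> ('n, 'k::field) mpoly" where
  "monom \<alpha> = Poly_Mapping.single \<alpha> 1"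

definition var :: "'n \<Rightarrow> ('n, 'k::field) mpoly" where
  "var i = monom (Poly_Mapping.single i 1)"

definition ideal_gen :: "('n, 'k::field) mpoly set \<Rightarrow> ('n, 'k) mpoly set" where
  "ideal_gen S = {x. \<exists>F c. finite F \<and> F \<subseteq> S \<and> x = (\<Sum>s\<in>F. c s * s)}"

definition is_ideal :: "('n, 'k::field) mpoly set \<Rightarrow> bool" where
  "is_ideal I \<longleftrightarrow> 0 \<in> I \<and> (\<forall>a\<in>I. \<forall>b\<in>I. a + b \<in> I) \<and> (\<forall>r. \<forall>a\<in>I. r * a \<in> I)"

definition ideal_mult :: "('n, 'k::field) mpoly set \<Rightarrow> ('n, 'k) mpoly set \<Rightarrow> ('n, 'k) mpoly set" where
  "ideal_mult I J = ideal_gen {a * b | a b. a \<in> I \<and> b \<in> J}"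

primrec ideal_pow :: "('n, 'k::field) mpoly set \<Rightarrow> nat \<Rightarrow> ('n, 'k) mpoly set" where
  "ideal_pow I 0 = UNIV"
| "ideal_pow I (Suc k) = ideal_mult I (ideal_pow I k)"

definition ideal_colon :: "('n, 'k::field) mpoly set \<Rightarrow> ('n, 'k) mpoly set \<Rightarrow> ('n, 'k) mpoly set" where
  "ideal_colon I J = {r. \<forall>j\<in>J. r * j \<in> I}"

definition radical :: "('n, 'k::field) mpoly set \<Rightarrow> ('n, 'k) mpoly set" where
  "radical I = {f. \<exists>k. f ^ k \<in> I}"

definition max_ideal :: "('n, 'k::field) mpoly set" where
  "max_ideal = ideal_gen (range var)"

definition monomial_ideal :: "('n, 'k::field) mpoly set \<Rightarrow> bool" where
  "monomial_ideal I \<longleftrightarrow> (\<exists>S. I = ideal_gen (monom ` S))"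

definition m_primary :: "('n, 'k::field) mpoly set \<Rightarrow> bool" where
  "m_primary I \<longleftrightarrow> is_ideal I \<and> radical I = max_ideal"

definition exp_le :: "('n \<Rightarrow>\<^sub>0 nat) \<Rightarrow> ('n \<Rightarrow>\<^sub>0 nat) \<Rightarrow> bool" where
  "exp_le \<beta> \<alpha> \<longleftrightarrow> (\<forall>i. Poly_Mapping.lookup \<beta> i \<le> Poly_Mapping.lookup \<alpha> i)"

definition mingens :: "('n, 'k::field) mpoly set \<Rightarrow> ('n \<Rightarrow>\<^sub>0 nat) set" where
  "mingens I = {\<alpha>. monom \<alpha> \<in> I \<and> (\<forall>\<beta>. exp_le \<beta> \<alpha> \<and> \<beta> \<noteq> \<alpha> \<longrightarrow> monom \<beta> \<notin> I)}"

definition pdeg :: "('n, 'k::field) mpoly set \<Rightarrow> 'n \<Rightarrow> nat" where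
  "pdeg I i = (THE d. Poly_Mapping.single i d \<in> mingens I)"

definition box :: "('n, 'k::field) mpoly set \<Rightarrow> ('n \<Rightarrow> nat) \<Rightarrow> ('n \<Rightarrow>\<^sub>0 nat) set" where
  "box I a = {\<beta>. \<forall>i. a i * pdeg I i \<le> Poly_Mapping.lookup \<beta> i \<and> Poly_Mapping.lookup \<beta> i \<le> (a i + 1) * pdeg I i}"

definition good :: "('n::finite, 'k::field) mpoly set \<Rightarrow> bool" where
  "good I \<longleftrightarrow> m_primary I \<and> monomial_ideal I \<and>
     (\<forall>l\<ge>1. \<forall>\<alpha>\<in>mingens (ideal_pow I l). \<exists>a. (\<Sum>i\<in>UNIV. a i) = l - 1 \<and> \<alpha> \<in> box I a)"

text \<open>Exponent vector of mu_1^{a_1} ... mu_n^{a_n}.\<close>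
definition shift :: "('n::finite, 'k::field) mpoly set \<Rightarrow> ('n \<Rightarrow> nat) \<Rightarrow> ('n \<Rightarrow>\<^sub>0 nat)" where
  "shift I a = (\<Sum>i\<in>UNIV. Poly_Mapping.single i (a i * pdeg I i))"

definition Ia :: "('n::finite, 'k::field) mpoly set \<Rightarrow> ('n \<Rightarrow> nat) \<Rightarrow> ('n, 'k) mpoly set" where
  "Ia I a = ideal_gen {monom (\<alpha> - shift I a) | \<alpha>.
              \<alpha> \<in> box I a \<inter> mingens (ideal_pow I ((\<Sum>i\<in>UNIV. a i) + 1))}"

definition ratliff_rush :: "('n, 'k::field) mpoly set \<Rightarrow> ('n, 'k) mpoly set" where
  "ratliff_rush I = (\<Union>k. ideal_colon (ideal_pow I (k + 1)) (ideal_pow I k))"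

definition unitv :: "nat \<Rightarrow> 'n \<Rightarrow> ('n \<Rightarrow> nat)" where
  "unitv t i = (\<lambda>j. if j = i then t else 0)"

end

theory Submission imports Defs "HOL-Library.Multiset" "HOL-Library.FuncSet" begin

definition up :: "('n \<Rightarrow>\<^sub>0 nat) set \<Rightarrow> ('n \<Rightarrow>\<^sub>0 nat) set" where
  "up A = {\<beta>. \<exists>\<alpha>\<in>A. exp_le \<alpha> \<beta>}"

definition MI :: "('n \<Rightarrow>\<^sub>0 nat) set \<Rightarrow> ('n, 'k::field) mpoly set" where
  "MI A = ideal_gen (monom ` A)"

lemma exp_le_refl[simp]: "exp_le a a" by (simp add: exp_le_def)
lemma exp_le_trans: "exp_le a b \<Longrightarrow> exp_le b c \<Longrightarrow> exp_le a c"
  unfolding exp_le_def using le_trans by blast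
lemma exp_le_add: "exp_le a b \<Longrightarrow> exp_le c e \<Longrightarrow> exp_le (a + c) (b + e)"
  unfolding exp_le_def by (simp add: lookup_add add_mono)
lemma exp_le_addR: "exp_le a (a + c)"
  unfolding exp_le_def by (simp add: lookup_add)
lemma exp_le_addL: "exp_le a (c + a)"
  unfolding exp_le_def by (simp add: lookup_add)
lemma exp_le_antisym: "exp_le a b \<Longrightarrow> exp_le b a \<Longrightarrow> a = b"
  unfolding exp_le_def by (intro poly_mapping_eqI) (meson le_antisym)
lemma exp_le_0[simp]: "exp_le 0 a" unfolding exp_le_def by simp
lemma exp_le_minus_add: "exp_le a b \<Longrightarrow> b - a + a = b"
  unfolding exp_le_def by (intro poly_mapping_eqI) (simp add: lookup_add lookup_minus)

lemma up_mono: "\<beta> \<in> up A \<Longrightarrow> exp_le \<beta> \<gamma> \<Longrightarrow> \<gamma> \<in> up A"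
  unfolding up_def using exp_le_trans by blast
lemma up_self: "a \<in> A \<Longrightarrow> a \<in> up A"
  unfolding up_def using exp_le_refl by blast
lemma up_up[simp]: "up (up A) = up A"
  unfolding up_def using exp_le_trans by fastforce

lemma ideal_gen_zero: "0 \<in> ideal_gen S"
  unfolding ideal_gen_def by (rule CollectI, rule exI[of _ "{}"]) auto

lemma ideal_gen_add:
  assumes "a \<in> ideal_gen S" "b \<in> ideal_gen S" shows "a + b \<in> ideal_gen S"
proof -
  obtain F1 c1 F2 c2 where F: "finite F1" "F1 \<subseteq> S" "a = (\<Sum>s\<in>F1. c1 s * s)"
     "finite F2" "F2 \<subseteq> S" "b = (\<Sum>s\<in>F2. c2 s * s)"
    using assms unfolding ideal_gen_def by blast
  define c where "c s = (if s \<in> F1 then c1 s else 0) + (if s \<in> F2 then c2 s else 0)" for s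
  have "(\<Sum>s\<in>F1\<union>F2. c s * s) = (\<Sum>s\<in>F1\<union>F2. (if s \<in> F1 then c1 s * s else 0))
        + (\<Sum>s\<in>F1\<union>F2. (if s \<in> F2 then c2 s * s else 0))"
    unfolding sum.distrib[symmetric] by (rule sum.cong) (auto simp: c_def distrib_right)
  also have "\<dots> = a + b"
    using F by (simp add: sum.inter_restrict[symmetric] Int_absorb1 Int_absorb2 )
  finally show ?thesis unfolding ideal_gen_def using F
    by (intro CollectI exI[of _ "F1 \<union> F2"] exI[of _ c]) auto
qed

lemma ideal_gen_smult:
  assumes "a \<in> ideal_gen S" shows "r * a \<in> ideal_gen S"
proof -
  obtain F c where F: "finite F" "F \<subseteq> S" "a = (\<Sum>s\<in>F. c s * s)"
    using assms unfolding ideal_gen_def by blast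
  have "r * a = (\<Sum>s\<in>F. (r * c s) * s)" unfolding F(3) sum_distrib_left
    by (rule sum.cong) (simp_all add: mult.assoc)
  then show ?thesis unfolding ideal_gen_def using F(1,2)
    by (intro CollectI exI[of _ F] exI[of _ "\<lambda>s. r * c s"]) simp
qed

lemma ideal_gen_gen: "s \<in> S \<Longrightarrow> s \<in> ideal_gen S"
  unfolding ideal_gen_def
  by (intro CollectI exI[of _ "{s}"] exI[of _ "\<lambda>_. 1"]) auto

lemma is_ideal_ideal_gen: "is_ideal (ideal_gen S)"
  unfolding is_ideal_def using ideal_gen_zero ideal_gen_add ideal_gen_smult by blast

lemma ideal_sum: assumes "is_ideal J" "finite F" "\<And>x. x \<in> F \<Longrightarrow> g x \<in> J" shows "sum g F \<in> J"
proof -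
  have z: "0 \<in> J" and a: "\<And>x y. x \<in> J \<Longrightarrow> y \<in> J \<Longrightarrow> x + y \<in> J"
    using assms(1) unfolding is_ideal_def by blast+
  show ?thesis using assms(2,3) by (induction F rule: finite_induct) (auto intro: z a)
qed

lemma ideal_gen_least: assumes "is_ideal J" "S \<subseteq> J" shows "ideal_gen S \<subseteq> J"
proof
  fix x assume "x \<in> ideal_gen S"
  then obtain F c where F: "finite F" "F \<subseteq> S" "x = (\<Sum>s\<in>F. c s * s)"
    unfolding ideal_gen_def by blast
  have mul: "\<And>r a. a \<in> J \<Longrightarrow> r * a \<in> J" using assms(1) unfolding is_ideal_def by blast
  show "x \<in> J" unfolding F(3)
  proof (rule ideal_sum[OF assms(1) F(1)])
    fix s assume "s \<in> F" then have "s \<in> J" using F(2) assms(2) by blast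
    then show "c s * s \<in> J" by (rule mul)
  qed
qed

lemma monom_mult: "monom a * monom b = (monom (a+b) :: ('n,'k::field) mpoly)"
  by (simp add: monom_def mult_single)

lemma keys_monom[simp]: "Poly_Mapping.keys (monom a :: ('n,'k::field) mpoly) = {a}"
  by (simp add: monom_def)

lemma poly_decomp: "f = (\<Sum>\<beta>\<in>Poly_Mapping.keys f. Poly_Mapping.single \<beta> (Poly_Mapping.lookup f \<beta>))"
  by (intro poly_mapping_eqI)
     (simp add: lookup_sum lookup_single when_def not_in_keys_iff_lookup_eq_zero)

lemma keys_MI: "f \<in> MI A \<Longrightarrow> Poly_Mapping.keys f \<subseteq> up A"
proof -
  assume "f \<in> MI A"
  then obtain F c where F: "finite F" "F \<subseteq> monom ` A" "f = (\<Sum>s\<in>F. c s * s)"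
    unfolding ideal_gen_def MI_def by blast
  have "Poly_Mapping.keys f \<subseteq> (\<Union>s\<in>F. Poly_Mapping.keys (c s * s))" unfolding F(3) by (rule keys_sum)
  also have "\<dots> \<subseteq> up A"
  proof (rule UN_least)
    fix s assume "s \<in> F"
    then obtain \<alpha> where "\<alpha> \<in> A" "s = monom \<alpha>" using F(2) by blast
    show "Poly_Mapping.keys (c s * s) \<subseteq> up A"
    proof
      fix x assume "x \<in> Poly_Mapping.keys (c s * s)"
      then have "x \<in> {a + b |a b. a \<in> Poly_Mapping.keys (c s) \<and> b \<in> Poly_Mapping.keys s}"
        using keys_mult[of "c s" s] by blast
      then obtain a where "x = a + \<alpha>" using \<open>s = monom \<alpha>\<close> by auto
      then show "x \<in> up A" unfolding up_def using \<open>\<alpha> \<in> A\<close> exp_le_addL by blast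
    qed
  qed
  finally show ?thesis .
qed

lemma MI_keys: assumes "Poly_Mapping.keys f \<subseteq> up A" shows "f \<in> (MI A :: ('n,'k::field) mpoly set)"
proof -
  have "(\<Sum>\<beta>\<in>Poly_Mapping.keys f. Poly_Mapping.single \<beta> (Poly_Mapping.lookup f \<beta>)) \<in> (MI A :: ('n,'k) mpoly set)"
  proof (rule ideal_sum[OF is_ideal_ideal_gen[of "monom ` A", folded MI_def]])
    fix \<beta> assume "\<beta> \<in> Poly_Mapping.keys f"
    then obtain \<alpha> where a: "\<alpha> \<in> A" "exp_le \<alpha> \<beta>" using assms unfolding up_def by blast
    have e: "\<beta> - \<alpha> + \<alpha> = \<beta>" by (rule exp_le_minus_add[OF a(2)])
    have eq: "Poly_Mapping.single \<beta> (Poly_Mapping.lookup f \<beta>) = Poly_Mapping.single (\<beta> - \<alpha>) (Poly_Mapping.lookup f \<beta>) * (monom \<alpha> :: ('n,'k) mpoly)"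
      unfolding monom_def mult_single e by simp
    have m: "(monom \<alpha> :: ('n,'k) mpoly) \<in> ideal_gen (monom ` A)" using a(1) by (intro ideal_gen_gen) blast
    show "Poly_Mapping.single \<beta> (Poly_Mapping.lookup f \<beta>) \<in> (MI A :: ('n,'k) mpoly set)"
      unfolding MI_def eq by (rule ideal_gen_smult[OF m])
  qed auto
  then show ?thesis using poly_decomp[of f] by simp
qed

lemma MI_iff: "f \<in> (MI A :: ('n,'k::field) mpoly set) \<longleftrightarrow> Poly_Mapping.keys f \<subseteq> up A"
  using keys_MI MI_keys by blast

lemma monom_MI_iff: "(monom \<beta> :: ('n,'k::field) mpoly) \<in> MI A \<longleftrightarrow> \<beta> \<in> up A"
  by (simp add: MI_iff)

lemma MI_eq_iff: "((MI A :: ('n,'k::field) mpoly set) = MI B) \<longleftrightarrow> up A = up B"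
proof
  assume "(MI A :: ('n,'k::field) mpoly set) = MI B"
  then show "up A = up B" using monom_MI_iff[where 'k='k] by blast
next
  assume "up A = up B"
  show "(MI A :: ('n,'k::field) mpoly set) = MI B"
  proof (rule set_eqI)
    fix f :: "('n,'k) mpoly"
    show "f \<in> MI A \<longleftrightarrow> f \<in> MI B" unfolding MI_iff using \<open>up A = up B\<close> by simp
  qed
qed


definition sumset :: "('n \<Rightarrow>\<^sub>0 nat) set \<Rightarrow> ('n \<Rightarrow>\<^sub>0 nat) set \<Rightarrow> ('n \<Rightarrow>\<^sub>0 nat) set" where
  "sumset A B = {a + b | a b. a \<in> A \<and> b \<in> B}"

primrec pw :: "('n \<Rightarrow>\<^sub>0 nat) set \<Rightarrow> nat \<Rightarrow> ('n \<Rightarrow>\<^sub>0 nat) set" where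
  "pw S 0 = {0}"
| "pw S (Suc k) = sumset S (pw S k)"

definition UU :: "('n \<Rightarrow>\<^sub>0 nat) set \<Rightarrow> nat \<Rightarrow> ('n \<Rightarrow>\<^sub>0 nat) set" where
  "UU S k = up (pw S k)"

lemma MI_mult: "ideal_mult (MI A) (MI B) = (MI (sumset A B) :: ('n,'k::field) mpoly set)"
proof
  show "ideal_mult (MI A) (MI B) \<subseteq> (MI (sumset A B) :: ('n,'k::field) mpoly set)"
    unfolding ideal_mult_def
  proof (rule ideal_gen_least[OF is_ideal_ideal_gen[of "monom ` sumset A B", folded MI_def]])
    show "{a * b |a b. a \<in> (MI A :: ('n,'k::field) mpoly set) \<and> b \<in> MI B} \<subseteq> MI (sumset A B)"
    proof
      fix x :: "('n,'k) mpoly" assume "x \<in> {a * b |a b. a \<in> (MI A :: ('n,'k::field) mpoly set) \<and> b \<in> MI B}"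
      then obtain a b :: "('n,'k) mpoly" where x: "x = a * b" "a \<in> MI A" "b \<in> MI B" by blast
      have "Poly_Mapping.keys x \<subseteq> up (sumset A B)"
      proof
        fix \<gamma> assume "\<gamma> \<in> Poly_Mapping.keys x"
        then have "\<gamma> \<in> {p + q |p q. p \<in> Poly_Mapping.keys a \<and> q \<in> Poly_Mapping.keys b}"
          using keys_mult[of a b] x(1) by blast
        then obtain p q where pq: "\<gamma> = p + q" "p \<in> Poly_Mapping.keys a" "q \<in> Poly_Mapping.keys b" by blast
        obtain \<alpha> where al: "\<alpha> \<in> A" "exp_le \<alpha> p" using pq(2) keys_MI[OF x(2)] unfolding up_def by blast
        obtain \<beta> where be: "\<beta> \<in> B" "exp_le \<beta> q" using pq(3) keys_MI[OF x(3)] unfolding up_def by blast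
        have "\<alpha> + \<beta> \<in> sumset A B" using al be unfolding sumset_def by blast
        moreover have "exp_le (\<alpha> + \<beta>) \<gamma>" using pq(1) al(2) be(2) by (simp add: exp_le_add)
        ultimately show "\<gamma> \<in> up (sumset A B)" unfolding up_def by blast
      qed
      then show "x \<in> MI (sumset A B)" by (rule MI_keys)
    qed
  qed
next
  show "(MI (sumset A B) :: ('n,'k::field) mpoly set) \<subseteq> ideal_mult (MI A) (MI B)"
    unfolding MI_def[of "sumset A B"] ideal_mult_def
  proof (rule ideal_gen_least[OF is_ideal_ideal_gen])
    show "monom ` sumset A B \<subseteq> ideal_gen {a * b |a b. a \<in> (MI A :: ('n,'k::field) mpoly set) \<and> b \<in> MI B}"
    proof
      fix x :: "('n,'k) mpoly" assume "x \<in> monom ` sumset A B"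
      then obtain \<alpha> \<beta> where ab: "\<alpha> \<in> A" "\<beta> \<in> B" "x = monom (\<alpha> + \<beta>)" unfolding sumset_def by blast
      then have "x = monom \<alpha> * monom \<beta>" by (simp add: monom_mult)
      moreover have "(monom \<alpha> :: ('n,'k) mpoly) \<in> MI A" "(monom \<beta> :: ('n,'k) mpoly) \<in> MI B"
        using ab by (simp_all add: monom_MI_iff up_self)
      ultimately show "x \<in> ideal_gen {a * b |a b. a \<in> (MI A :: ('n,'k::field) mpoly set) \<and> b \<in> MI B}"
        by (intro ideal_gen_gen) blast
    qed
  qed
qed

lemma up_zero: "up {0} = UNIV" unfolding up_def by auto

lemma pow_MI: "ideal_pow (MI S :: ('n,'k::field) mpoly set) k = MI (pw S k)"
proof (induction k)
  case 0
  show ?case by (auto simp: MI_iff up_zero)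
next
  case (Suc k)
  then show ?case by (simp add: MI_mult)
qed

lemma pw_one: "sumset S {0} = S" unfolding sumset_def by auto

lemma UU_up: "w \<in> UU S k \<Longrightarrow> exp_le w w' \<Longrightarrow> w' \<in> UU S k"
  unfolding UU_def by (rule up_mono)

lemma pw_add: "p \<in> pw S a \<Longrightarrow> q \<in> pw S b \<Longrightarrow> p + q \<in> pw S (a + b)"
proof (induction a arbitrary: p)
  case 0 then show ?case by simp
next
  case (Suc a)
  then obtain s p' where "s \<in> S" "p' \<in> pw S a" "p = s + p'" by (auto simp: sumset_def)
  then have "p + q = s + (p' + q)" "p' + q \<in> pw S (a + b)" using Suc by (simp_all add: add.assoc)
  then show ?case using \<open>s \<in> S\<close> by (auto simp: sumset_def)
qed

lemma pw_split: "p \<in> pw S (a + b) \<Longrightarrow> \<exists>x y. x \<in> pw S a \<and> y \<in> pw S b \<and> p = x + y"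
proof (induction a arbitrary: p)
  case 0 then show ?case by force
next
  case (Suc a)
  then obtain s p' where "s \<in> S" "p' \<in> pw S (a + b)" "p = s + p'" by (auto simp: sumset_def)
  then obtain x y where "x \<in> pw S a" "y \<in> pw S b" "p' = x + y" using Suc.IH by blast
  then have "s + x \<in> pw S (Suc a)" "p = (s + x) + y" using \<open>s \<in> S\<close> \<open>p = s + p'\<close>
    by (auto simp: sumset_def add.assoc)
  then show ?case using \<open>y \<in> pw S b\<close> by blast
qed

lemma UU_add: "x \<in> UU S a \<Longrightarrow> y \<in> UU S b \<Longrightarrow> x + y \<in> UU S (a + b)"
  unfolding UU_def up_def using pw_add exp_le_add by blast

lemma UU_anti: assumes "a \<le> b" "w \<in> UU S b" shows "w \<in> UU S a"
proof -
  obtain p where p: "p \<in> pw S (a + (b - a))" "exp_le p w" using assms unfolding UU_def up_def by auto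
  then obtain x y where "x \<in> pw S a" "p = x + y" using pw_split by blast
  then show ?thesis unfolding UU_def up_def using p(2) exp_le_addR exp_le_trans by blast
qed

lemma UU_zero: "UU S 0 = UNIV" by (simp add: UU_def up_zero)
lemma UU_one: "UU S 1 = up S" by (simp add: UU_def pw_one)
lemma UU_Suc0: "UU S (Suc 0) = up S" by (simp add: UU_def pw_one)

lemma UU_sum: "finite A \<Longrightarrow> (\<And>j. j \<in> A \<Longrightarrow> x j \<in> UU S (m j)) \<Longrightarrow> sum x A \<in> UU S (sum m A)"
proof (induction A rule: finite_induct)
  case empty then show ?case by (simp add: UU_zero)
next
  case (insert j A) then show ?case by (simp add: UU_add)
qed

definition mg :: "('n \<Rightarrow>\<^sub>0 nat) set \<Rightarrow> ('n \<Rightarrow>\<^sub>0 nat) set" where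
  "mg X = {\<alpha>. \<alpha> \<in> X \<and> (\<forall>\<beta>. exp_le \<beta> \<alpha> \<and> \<beta> \<noteq> \<alpha> \<longrightarrow> \<beta> \<notin> X)}"

lemma mingens_MI: "mingens (MI A :: ('n,'k::field) mpoly set) = mg (up A)"
  unfolding mingens_def mg_def by (simp add: monom_MI_iff)

definition deg :: "('n::finite \<Rightarrow>\<^sub>0 nat) \<Rightarrow> nat" where
  "deg w = (\<Sum>j\<in>UNIV. Poly_Mapping.lookup w j)"

lemma deg_less: assumes "exp_le \<beta> \<alpha>" "\<beta> \<noteq> \<alpha>" shows "deg \<beta> < deg (\<alpha> :: 'n::finite \<Rightarrow>\<^sub>0 nat)"
proof -
  have "\<exists>j. Poly_Mapping.lookup \<beta> j \<noteq> Poly_Mapping.lookup \<alpha> j"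
  proof (rule ccontr)
    assume "\<not> (\<exists>j. Poly_Mapping.lookup \<beta> j \<noteq> Poly_Mapping.lookup \<alpha> j)"
    then have "\<beta> = \<alpha>" by (intro poly_mapping_eqI) auto
    then show False using assms(2) by simp
  qed
  then obtain j where j: "Poly_Mapping.lookup \<beta> j \<noteq> Poly_Mapping.lookup \<alpha> j" by blast
  have "Poly_Mapping.lookup \<beta> j \<le> Poly_Mapping.lookup \<alpha> j" using assms(1) unfolding exp_le_def by blast
  then have "Poly_Mapping.lookup \<beta> j < Poly_Mapping.lookup \<alpha> j" using j by simp
  then show ?thesis unfolding deg_def
    by (intro sum_strict_mono_ex1) (use assms(1) in \<open>auto simp: exp_le_def\<close>)
qed

lemma mg_exists: "w \<in> X \<Longrightarrow> \<exists>g\<in>mg X. exp_le g (w :: 'n::finite \<Rightarrow>\<^sub>0 nat)"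
proof (induction "deg w" arbitrary: w rule: less_induct)
  case less
  show ?case
  proof (cases "w \<in> mg X")
    case True then show ?thesis by (intro bexI[of _ w]) auto
  next
    case False
    then obtain \<beta> where b: "exp_le \<beta> w" "\<beta> \<noteq> w" "\<beta> \<in> X" using less.prems unfolding mg_def by blast
    then obtain g where "g \<in> mg X" "exp_le g \<beta>" using less.hyps[OF deg_less[OF b(1,2)]] by blast
    then show ?thesis using b(1) exp_le_trans by blast
  qed
qed


lemma exp_le_strict_ex: assumes "exp_le \<beta> \<alpha>" "\<beta> \<noteq> \<alpha>"
  shows "\<exists>j. Poly_Mapping.lookup \<beta> j < Poly_Mapping.lookup \<alpha> j"
proof -
  have "\<exists>j. Poly_Mapping.lookup \<beta> j \<noteq> Poly_Mapping.lookup \<alpha> j"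
  proof (rule ccontr)
    assume "\<not> (\<exists>j. Poly_Mapping.lookup \<beta> j \<noteq> Poly_Mapping.lookup \<alpha> j)"
    then have "\<beta> = \<alpha>" by (intro poly_mapping_eqI) auto
    then show False using assms(2) by simp
  qed
  then obtain j where j: "Poly_Mapping.lookup \<beta> j \<noteq> Poly_Mapping.lookup \<alpha> j" by blast
  have "Poly_Mapping.lookup \<beta> j \<le> Poly_Mapping.lookup \<alpha> j" using assms(1) unfolding exp_le_def by blast
  then show ?thesis using j le_neq_implies_less by blast
qed

lemma exp_le_single: "exp_le (Poly_Mapping.single i a) (Poly_Mapping.single i b) \<longleftrightarrow> a \<le> b"
  unfolding exp_le_def by (auto simp: lookup_single when_def)

lemma le_single_eq: assumes "exp_le \<beta> (Poly_Mapping.single i c)"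
  shows "\<beta> = Poly_Mapping.single i (Poly_Mapping.lookup \<beta> i)"
proof (rule poly_mapping_eqI)
  fix j show "Poly_Mapping.lookup \<beta> j = Poly_Mapping.lookup (Poly_Mapping.single i (Poly_Mapping.lookup \<beta> i)) j"
    using assms unfolding exp_le_def by (cases "j = i") (auto simp: lookup_single when_def, metis le_zero_eq)
qed

primrec rep :: "('n \<Rightarrow>\<^sub>0 nat) \<Rightarrow> nat \<Rightarrow> ('n \<Rightarrow>\<^sub>0 nat)" where
  "rep a 0 = 0"
| "rep a (Suc n) = a + rep a n"

lemma lookup_rep: "Poly_Mapping.lookup (rep a n) j = n * Poly_Mapping.lookup a j"
  by (induction n) (simp_all add: lookup_add)

lemma rep_UU: "u \<in> UU S (Suc 0) \<Longrightarrow> rep u n \<in> UU S n"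
proof (induction n)
  case 0 then show ?case by (simp add: UU_zero)
next
  case (Suc n) then show ?case using UU_add[of u S 1 "rep u n" n] by simp
qed

locale goodI =
  fixes I :: "('n::finite, 'k::field) mpoly set" and S :: "('n \<Rightarrow>\<^sub>0 nat) set"
  assumes good: "good I" and IS: "I = MI S"
begin

abbreviation U where "U \<equiv> UU S"

lemma pow_I: "ideal_pow I k = MI (pw S k)" using pow_MI IS by simp
lemma mingens_pow: "mingens (ideal_pow I k) = mg (U k)" by (simp add: pow_I mingens_MI UU_def)
lemma mingens_I: "mingens I = mg (U (Suc 0))" by (simp add: IS mingens_MI UU_Suc0)
lemma monom_I: "monom w \<in> I \<longleftrightarrow> w \<in> U (Suc 0)" by (simp add: IS monom_MI_iff UU_Suc0)

lemma max_ideal_MI: "(max_ideal :: ('n,'k) mpoly set) = MI (range (\<lambda>i. Poly_Mapping.single i 1))"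
proof -
  have "range (var :: 'n \<Rightarrow> ('n,'k) mpoly) = monom ` range (\<lambda>i. Poly_Mapping.single i 1)"
    by (auto simp: var_def)
  then show ?thesis unfolding max_ideal_def MI_def by simp
qed

lemma zero_notin: "0 \<notin> U (Suc 0)"
proof
  assume "0 \<in> U (Suc 0)"
  then have "monom 0 \<in> I" by (simp add: monom_I)
  then have one: "1 \<in> I" by (simp add: monom_def)
  have "radical I = UNIV" unfolding radical_def using one by (auto intro: exI[of _ 0])
  then have "monom 0 \<in> (max_ideal :: ('n,'k) mpoly set)" using good unfolding good_def m_primary_def by auto
  then have "0 \<in> up (range (\<lambda>i::'n. Poly_Mapping.single i (1::nat)))" unfolding max_ideal_MI monom_MI_iff .
  then obtain i :: 'n where "exp_le (Poly_Mapping.single i 1) 0" unfolding up_def by blast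
  then show False unfolding exp_le_def by (metis lookup_single_eq lookup_zero not_one_le_zero)
qed

lemma var_pow: "(var i :: ('n,'k) mpoly) ^ k = monom (Poly_Mapping.single i k)"
proof (induction k)
  case 0 then show ?case by (simp add: monom_def)
next
  case (Suc k) then show ?case by (simp add: var_def monom_mult single_add[symmetric])
qed

lemma exists_pure: "\<exists>k. Poly_Mapping.single i k \<in> U (Suc 0)"
proof -
  have "(var i :: ('n,'k) mpoly) \<in> max_ideal" unfolding max_ideal_def by (rule ideal_gen_gen) simp
  then have "var i \<in> radical I" using good unfolding good_def m_primary_def by simp
  then obtain k where "(var i :: ('n,'k) mpoly) ^ k \<in> I" unfolding radical_def by blast
  then show ?thesis by (auto simp: var_pow monom_I)
qed

definition dd :: "'n \<Rightarrow> nat" where "dd i = (LEAST c. Poly_Mapping.single i c \<in> U (Suc 0))"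

lemma dd_in: "Poly_Mapping.single i (dd i) \<in> U (Suc 0)"
  unfolding dd_def using exists_pure by (rule LeastI_ex)

lemma dd_least: "c < dd i \<Longrightarrow> Poly_Mapping.single i c \<notin> U (Suc 0)"
  unfolding dd_def by (rule not_less_Least)

lemma dd_pos: "dd i \<ge> 1"
proof (rule ccontr)
  assume "\<not> 1 \<le> dd i" then have "dd i = 0" by simp
  then show False using dd_in[of i] zero_notin by simp
qed

lemma dd_mg: "Poly_Mapping.single i c \<in> mg (U (Suc 0)) \<longleftrightarrow> c = dd i"
proof
  assume m: "Poly_Mapping.single i c \<in> mg (U (Suc 0))"
  then have "Poly_Mapping.single i c \<in> U (Suc 0)" unfolding mg_def by blast
  then have "\<not> c < dd i" using dd_least by blast
  moreover have "\<not> dd i < c"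
  proof
    assume "dd i < c"
    then have "exp_le (Poly_Mapping.single i (dd i)) (Poly_Mapping.single i c)"
      by (auto simp: exp_le_single)
    moreover have "Poly_Mapping.single i (dd i) \<noteq> Poly_Mapping.single i c"
      using \<open>dd i < c\<close> inj_single[of i] unfolding inj_def by (metis less_irrefl)
    ultimately show False using m dd_in unfolding mg_def by blast
  qed
  ultimately show "c = dd i" by simp
next
  assume c: "c = dd i"
  show "Poly_Mapping.single i c \<in> mg (U (Suc 0))"
    unfolding mg_def
  proof (intro CollectI conjI allI impI)
    show "Poly_Mapping.single i c \<in> U (Suc 0)" using c dd_in by simp
    fix \<beta> assume b: "exp_le \<beta> (Poly_Mapping.single i c) \<and> \<beta> \<noteq> Poly_Mapping.single i c"
    have eq: "\<beta> = Poly_Mapping.single i (Poly_Mapping.lookup \<beta> i)" by (rule le_single_eq) (use b in blast)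
    then have "Poly_Mapping.lookup \<beta> i \<le> c" "Poly_Mapping.lookup \<beta> i \<noteq> c" using b
      by (metis exp_le_single, metis)
    then show "\<beta> \<notin> U (Suc 0)" using eq c dd_least by (metis le_neq_implies_less)
  qed
qed

lemma pdeg_eq: "pdeg I i = dd i"
  unfolding pdeg_def mingens_I
proof (rule the_equality)
  show "Poly_Mapping.single i (dd i) \<in> mg (U (Suc 0))" using dd_mg[of i "dd i"] by blast
  fix x assume "Poly_Mapping.single i x \<in> mg (U (Suc 0))"
  then show "x = dd i" using dd_mg by blast
qed

lemma box_iff: "\<beta> \<in> box I a \<longleftrightarrow> (\<forall>j. a j * dd j \<le> Poly_Mapping.lookup \<beta> j \<and> Poly_Mapping.lookup \<beta> j \<le> (a j + 1) * dd j)"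
  by (simp add: box_def pdeg_eq)

lemma good_box: "l \<ge> 1 \<Longrightarrow> \<alpha> \<in> mg (U l) \<Longrightarrow> \<exists>a. sum a UNIV = l - 1 \<and> \<alpha> \<in> box I a"
  using good unfolding good_def mingens_pow by blast

definition LL :: nat where "LL = prod dd UNIV"
definition wt :: "'n \<Rightarrow> nat" where "wt j = LL div dd j"
definition psi :: "('n \<Rightarrow>\<^sub>0 nat) \<Rightarrow> nat" where "psi w = (\<Sum>j\<in>UNIV. Poly_Mapping.lookup w j * wt j)"

lemma LL_pos: "LL > 0"
  unfolding LL_def using dd_pos by (simp add: Suc_le_eq)

lemma dd_wt: "dd j * wt j = LL"
proof -
  have "dd j dvd LL" unfolding LL_def by (rule dvd_prodI) auto
  then show ?thesis unfolding wt_def by simp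
qed

lemma wt_pos: "wt j > 0"
  using dd_wt[of j] LL_pos by (metis mult_0_right neq0_conv)

lemma psi_add: "psi (x + y) = psi x + psi y"
  unfolding psi_def by (simp add: lookup_add distrib_right sum.distrib)

lemma psi_mono: "exp_le x y \<Longrightarrow> psi x \<le> psi y"
  unfolding psi_def exp_le_def by (intro sum_mono mult_le_mono1) auto

lemma psi_strict: assumes "exp_le x y" "x \<noteq> y" shows "psi x < psi y"
proof -
  obtain j where j: "Poly_Mapping.lookup x j < Poly_Mapping.lookup y j" using exp_le_strict_ex assms by blast
  show ?thesis unfolding psi_def
  proof (rule sum_strict_mono_ex1)
    show "\<forall>i\<in>UNIV. Poly_Mapping.lookup x i * wt i \<le> Poly_Mapping.lookup y i * wt i"
      using assms(1) unfolding exp_le_def by (auto intro: mult_le_mono1)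
    show "\<exists>a\<in>UNIV. Poly_Mapping.lookup x a * wt a < Poly_Mapping.lookup y a * wt a"
      using j wt_pos by (intro bexI[of _ j]) auto
  qed simp
qed

lemma psi_single: "psi (Poly_Mapping.single i c) = c * wt i"
proof -
  have "psi (Poly_Mapping.single i c) = (\<Sum>j\<in>UNIV. if j = i then c * wt i else 0)"
    unfolding psi_def by (rule sum.cong) (auto simp: lookup_single when_def)
  also have "\<dots> = c * wt i" by simp
  finally show ?thesis .
qed

lemma psi_rep: "psi (rep u n) = n * psi u"
  by (induction n) (simp_all add: psi_add, simp add: psi_def)

lemma psi_box: assumes "\<alpha> \<in> box I a" shows "sum a UNIV * LL \<le> psi \<alpha>"
proof -
  have "sum a UNIV * LL = (\<Sum>j\<in>UNIV. a j * dd j * wt j)"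
    by (simp add: sum_distrib_right dd_wt mult.assoc)
  also have "\<dots> \<le> psi \<alpha>" unfolding psi_def
    using assms unfolding box_iff by (intro sum_mono mult_le_mono1) auto
  finally show ?thesis .
qed

lemma psi_U_good: assumes "l \<ge> 1" "w \<in> U l" shows "(l - 1) * LL \<le> psi w"
proof -
  obtain g where g: "g \<in> mg (U l)" "exp_le g w" using mg_exists assms(2) by blast
  then obtain a where "sum a UNIV = l - 1" "g \<in> box I a" using good_box assms(1) by blast
  then have "(l - 1) * LL \<le> psi g" using psi_box[of g a] by simp
  also have "\<dots> \<le> psi w" using g(2) by (rule psi_mono)
  finally show ?thesis .
qed

lemma psi_S: assumes "u \<in> U (Suc 0)" shows "LL \<le> psi u"
proof (rule ccontr)
  assume "\<not> LL \<le> psi u"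
  then have lt: "psi u + 1 \<le> LL" by simp
  have "rep u (LL + 1) \<in> U (LL + 1)" using rep_UU assms by blast
  then have "(LL + 1 - 1) * LL \<le> psi (rep u (LL + 1))" by (intro psi_U_good) auto
  then have a: "LL * LL \<le> (LL + 1) * psi u" unfolding psi_rep by simp
  have "(LL + 1) * (psi u + 1) \<le> (LL + 1) * LL" using lt by (rule mult_le_mono2)
  then show False using a by (simp add: algebra_simps)
qed

lemma psi_pw: "p \<in> pw S l \<Longrightarrow> l * LL \<le> psi p"
proof (induction l arbitrary: p)
  case 0 then show ?case by simp
next
  case (Suc l)
  then obtain s p' where "s \<in> S" "p' \<in> pw S l" "p = s + p'" by (auto simp: sumset_def)
  moreover have "s \<in> U (Suc 0)" using \<open>s \<in> S\<close> by (simp add: UU_Suc0 up_self)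
  ultimately have "l * LL \<le> psi p'" "LL \<le> psi s" "p = s + p'" using Suc.IH psi_S by auto
  then show ?case by (simp add: psi_add)
qed

lemma psi_U: "w \<in> U l \<Longrightarrow> l * LL \<le> psi w"
  unfolding UU_def up_def using psi_pw psi_mono le_trans by blast


lemma single_t_U: "Poly_Mapping.single i (t * dd i) \<in> U t"
proof (induction t)
  case 0 show ?case by (simp add: UU_zero)
next
  case (Suc t)
  have "Poly_Mapping.single i (Suc t * dd i) = Poly_Mapping.single i (dd i) + Poly_Mapping.single i (t * dd i)"
    by (simp add: single_add[symmetric])
  then show ?case using UU_add[OF dd_in Suc.IH] by simp
qed

lemma psi_sh: "psi (Poly_Mapping.single i (t * dd i)) = t * LL"
  by (simp add: psi_single dd_wt mult.assoc)

definition K :: "'n \<Rightarrow> nat \<Rightarrow> ('n \<Rightarrow>\<^sub>0 nat) set" where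
  "K i t = {v. v + Poly_Mapping.single i (t * dd i) \<in> U (Suc t)}"

definition Jgen :: "'n \<Rightarrow> nat \<Rightarrow> ('n \<Rightarrow>\<^sub>0 nat) set" where
  "Jgen i t = {\<alpha> - Poly_Mapping.single i (t * dd i) | \<alpha>. \<alpha> \<in> box I (unitv t i) \<inter> mg (U (Suc t))}"

lemma shift_unitv: "shift I (unitv t i) = Poly_Mapping.single i (t * dd i)"
proof -
  have "shift I (unitv t i) = (\<Sum>j\<in>UNIV. if j = i then Poly_Mapping.single i (t * dd i) else 0)"
    unfolding shift_def pdeg_eq by (rule sum.cong) (auto simp: unitv_def)
  then show ?thesis by simp
qed

lemma sum_unitv: "sum (unitv t (i::'n)) UNIV = t"
proof -
  have "sum (unitv t i) UNIV = (\<Sum>j\<in>UNIV. if j = i then t else 0)"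
    by (rule sum.cong) (auto simp: unitv_def)
  also have "\<dots> = t" by (subst sum.delta) auto
  finally show ?thesis .
qed

lemma Ia_eq: "Ia I (unitv t i) = MI (Jgen i t)"
proof -
  have "{monom (\<alpha> - shift I (unitv t i)) | \<alpha>. \<alpha> \<in> box I (unitv t i) \<inter> mingens (ideal_pow I (sum (unitv t i) UNIV + 1))}
      = monom ` Jgen i t"
    unfolding shift_unitv sum_unitv mingens_pow Jgen_def by auto
  then show ?thesis unfolding Ia_def MI_def by (rule arg_cong)
qed

lemma unitv_box_iff: "\<beta> \<in> box I (unitv t i) \<longleftrightarrow>
   (t * dd i \<le> Poly_Mapping.lookup \<beta> i \<and> Poly_Mapping.lookup \<beta> i \<le> (t + 1) * dd i) \<and>
   (\<forall>j. j \<noteq> i \<longrightarrow> Poly_Mapping.lookup \<beta> j \<le> dd j)"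
proof
  assume H: "\<beta> \<in> box I (unitv t i)"
  have H': "unitv t i j * dd j \<le> Poly_Mapping.lookup \<beta> j \<and> Poly_Mapping.lookup \<beta> j \<le> (unitv t i j + 1) * dd j" for j
    using H unfolding box_iff by blast
  show "(t * dd i \<le> Poly_Mapping.lookup \<beta> i \<and> Poly_Mapping.lookup \<beta> i \<le> (t + 1) * dd i) \<and>
   (\<forall>j. j \<noteq> i \<longrightarrow> Poly_Mapping.lookup \<beta> j \<le> dd j)"
  proof (intro conjI allI impI)
    show "t * dd i \<le> Poly_Mapping.lookup \<beta> i" "Poly_Mapping.lookup \<beta> i \<le> (t + 1) * dd i"
      using H'[of i] by (simp_all add: unitv_def)
    fix j assume "j \<noteq> i" then show "Poly_Mapping.lookup \<beta> j \<le> dd j" using H'[of j] by (simp add: unitv_def)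
  qed
next
  assume H: "(t * dd i \<le> Poly_Mapping.lookup \<beta> i \<and> Poly_Mapping.lookup \<beta> i \<le> (t + 1) * dd i) \<and>
   (\<forall>j. j \<noteq> i \<longrightarrow> Poly_Mapping.lookup \<beta> j \<le> dd j)"
  have "unitv t i j * dd j \<le> Poly_Mapping.lookup \<beta> j \<and> Poly_Mapping.lookup \<beta> j \<le> (unitv t i j + 1) * dd j" for j
    using H by (cases "j = i") (simp_all add: unitv_def)
  then show "\<beta> \<in> box I (unitv t i)" unfolding box_iff by blast
qed

lemma K_eq: "up (Jgen i t) = K i t"
proof
  show "up (Jgen i t) \<subseteq> K i t"
  proof
    fix v assume "v \<in> up (Jgen i t)"
    then obtain \<alpha> where a: "\<alpha> \<in> box I (unitv t i)" "\<alpha> \<in> mg (U (Suc t))"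
      "exp_le (\<alpha> - Poly_Mapping.single i (t * dd i)) v"
      unfolding up_def Jgen_def by blast
    have le: "exp_le (Poly_Mapping.single i (t * dd i)) \<alpha>"
      using a(1) unfolding unitv_box_iff exp_le_def by (auto simp: lookup_single when_def)
    have "exp_le (\<alpha> - Poly_Mapping.single i (t * dd i) + Poly_Mapping.single i (t * dd i))
              (v + Poly_Mapping.single i (t * dd i))"
      using a(3) by (rule exp_le_add) simp
    then have "exp_le \<alpha> (v + Poly_Mapping.single i (t * dd i))" using exp_le_minus_add[OF le] by simp
    moreover have "\<alpha> \<in> U (Suc t)" using a(2) unfolding mg_def by blast
    ultimately show "v \<in> K i t" unfolding K_def using UU_up by blast
  qed
next
  show "K i t \<subseteq> up (Jgen i t)"
  proof
    fix v assume "v \<in> K i t"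
    then have vU: "v + Poly_Mapping.single i (t * dd i) \<in> U (Suc t)" unfolding K_def by blast
    define sh where "sh = Poly_Mapping.single i (t * dd i)"
    show "v \<in> up (Jgen i t)"
    proof (cases "\<exists>j. j \<noteq> i \<and> dd j \<le> Poly_Mapping.lookup v j")
      case True
      then obtain j where j: "j \<noteq> i" "dd j \<le> Poly_Mapping.lookup v j" by blast
      define p where "p = Poly_Mapping.single j (dd j) + sh"
      have pU: "p \<in> U (Suc t)" unfolding p_def sh_def using UU_add[OF dd_in single_t_U] by simp
      have psip: "psi p = Suc t * LL" unfolding p_def sh_def by (simp add: psi_add psi_sh psi_single dd_wt)
      have "p \<in> mg (U (Suc t))"
        unfolding mg_def
      proof (intro CollectI conjI allI impI)
        show "p \<in> U (Suc t)" by (rule pU)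
        fix \<beta> assume b: "exp_le \<beta> p \<and> \<beta> \<noteq> p"
        show "\<beta> \<notin> U (Suc t)"
        proof
          assume "\<beta> \<in> U (Suc t)"
          then have "Suc t * LL \<le> psi \<beta>" by (rule psi_U)
          moreover have "psi \<beta> < psi p" using b psi_strict by blast
          ultimately show False using psip by simp
        qed
      qed
      moreover have "p \<in> box I (unitv t i)"
        unfolding unitv_box_iff p_def sh_def using j(1)
        by (auto simp: lookup_add lookup_single when_def)
      moreover have "p - sh = Poly_Mapping.single j (dd j)" unfolding p_def by simp
      moreover have "exp_le (Poly_Mapping.single j (dd j)) v"
        using j(2) unfolding exp_le_def by (auto simp: lookup_single when_def)
      ultimately have "Poly_Mapping.single j (dd j) \<in> Jgen i t" unfolding Jgen_def sh_def by force
      then show ?thesis unfolding up_def using \<open>exp_le (Poly_Mapping.single j (dd j)) v\<close> by blast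
    next
      case False
      then have small: "\<And>j. j \<noteq> i \<Longrightarrow> Poly_Mapping.lookup v j < dd j" by (meson not_le)
      obtain g where g: "g \<in> mg (U (Suc t))" "exp_le g (v + sh)" using mg_exists vU unfolding sh_def by blast
      obtain a where a: "sum a UNIV = t" "g \<in> box I a" using good_box[OF _ g(1)] by auto
      have a0: "a j = 0" if "j \<noteq> i" for j
      proof (rule ccontr)
        assume "a j \<noteq> 0"
        then have "dd j \<le> a j * dd j" by simp
        also have "\<dots> \<le> Poly_Mapping.lookup g j" using a(2) unfolding box_iff by blast
        also have "\<dots> \<le> Poly_Mapping.lookup (v + sh) j" using g(2) unfolding exp_le_def by blast
        also have "\<dots> = Poly_Mapping.lookup v j" using that unfolding sh_def by (simp add: lookup_add lookup_single)
        finally show False using small[OF that] by simp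
      qed
      have "sum a UNIV = (\<Sum>j\<in>UNIV. if j = i then a i else 0)"
        by (rule sum.cong) (auto simp: a0)
      then have "a i = t" using a(1) by simp
      then have "a = unitv t i" using a0 unfolding unitv_def by auto
      then have gb: "g \<in> box I (unitv t i)" using a(2) by simp
      have "exp_le (g - sh) v"
        using g(2) unfolding exp_le_def by (simp add: lookup_add lookup_minus le_diff_conv)
      then show ?thesis unfolding up_def Jgen_def sh_def using g(1) gb by blast
    qed
  qed
qed

lemma K_mono: "K i t \<subseteq> K i (Suc t)"
proof
  fix v assume "v \<in> K i t"
  then have "Poly_Mapping.single i (dd i) + (v + Poly_Mapping.single i (t * dd i)) \<in> U (Suc 0 + Suc t)"
    unfolding K_def by (intro UU_add dd_in) simp
  moreover have "Poly_Mapping.single i (dd i) + (v + Poly_Mapping.single i (t * dd i))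
     = v + Poly_Mapping.single i (Suc t * dd i)"
    by (simp add: single_add[symmetric] algebra_simps)
  ultimately show "v \<in> K i (Suc t)" unfolding K_def by simp
qed

lemma K_mono_le: "t \<le> t' \<Longrightarrow> K i t \<subseteq> K i t'"
  using lift_Suc_mono_le[of "K i", OF K_mono] by blast

lemma K_out: assumes "dd j \<le> Poly_Mapping.lookup v j" shows "v \<in> K i t"
proof -
  have "Poly_Mapping.single j (dd j) + Poly_Mapping.single i (t * dd i) \<in> U (Suc 0 + t)"
    by (intro UU_add dd_in single_t_U)
  moreover have "exp_le (Poly_Mapping.single j (dd j) + Poly_Mapping.single i (t * dd i))
      (v + Poly_Mapping.single i (t * dd i))"
    using assms by (intro exp_le_add) (auto simp: exp_le_def lookup_single when_def)
  ultimately show ?thesis unfolding K_def using UU_up by simp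
qed

end

lemma finite_bounded: "finite {v :: 'n::finite \<Rightarrow>\<^sub>0 nat. \<forall>j. Poly_Mapping.lookup v j \<le> b j}"
proof -
  have "Poly_Mapping.lookup ` {v :: 'n \<Rightarrow>\<^sub>0 nat. \<forall>j. Poly_Mapping.lookup v j \<le> b j} \<subseteq> Pi\<^sub>E UNIV (\<lambda>j. {..b j})"
    by (auto simp: PiE_UNIV_domain)
  then have "finite (Poly_Mapping.lookup ` {v :: 'n \<Rightarrow>\<^sub>0 nat. \<forall>j. Poly_Mapping.lookup v j \<le> b j})"
    by (rule finite_subset) (intro finite_PiE, auto)
  moreover have "inj_on Poly_Mapping.lookup {v :: 'n \<Rightarrow>\<^sub>0 nat. \<forall>j. Poly_Mapping.lookup v j \<le> b j}"
    by (auto intro: inj_onI poly_mapping_eqI)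
  ultimately show ?thesis by (rule finite_imageD)
qed

context goodI
begin

definition Bx :: "('n \<Rightarrow>\<^sub>0 nat) set" where "Bx = {v. \<forall>j. Poly_Mapping.lookup v j < dd j}"

lemma finite_Bx: "finite Bx"
  by (rule finite_subset[OF _ finite_bounded[of dd]]) (auto simp: Bx_def less_imp_le)

lemma K_stable: "\<exists>q. \<forall>t\<ge>q. K i t = K i q"
proof -
  define f where "f t = card (K i t \<inter> Bx)" for t
  have fb: "f t \<le> card Bx" for t unfolding f_def by (rule card_mono[OF finite_Bx]) blast
  have fin: "finite (range f)" by (rule finite_subset[of _ "{..card Bx}"]) (auto simp: fb)
  obtain q where q: "f q = Max (range f)" using Max_in[OF fin] by auto
  have "K i t = K i q" if "t \<ge> q" for t
  proof -
    have sub: "K i q \<inter> Bx \<subseteq> K i t \<inter> Bx" using K_mono_le[OF that] by blast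
    have "f t \<le> f q" using q fin by simp
    moreover have "f q \<le> f t" unfolding f_def by (rule card_mono) (use finite_Bx sub in auto)
    ultimately have "K i q \<inter> Bx = K i t \<inter> Bx" unfolding f_def
      by (intro card_subset_eq) (use finite_Bx sub in auto)
    moreover have "v \<in> K i q" if v: "v \<in> K i t" "v \<notin> Bx" for v
    proof -
      obtain j where "dd j \<le> Poly_Mapping.lookup v j" using v(2) unfolding Bx_def by (auto simp: not_less)
      then show ?thesis by (rule K_out)
    qed
    ultimately show ?thesis using K_mono_le[OF that] by blast
  qed
  then show ?thesis by blast
qed

definition qq :: "'n \<Rightarrow> nat" where "qq i = (LEAST q. \<forall>t\<ge>q. K i t = K i q)"

lemma qq_prop: "t \<ge> qq i \<Longrightarrow> K i t = K i (qq i)"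
  using LeastI_ex[OF K_stable[of i]] unfolding qq_def by blast

end

lemma lookup_mult_monom:
  "Poly_Mapping.lookup (f * monom y) (\<beta> + y) = Poly_Mapping.lookup (f :: ('n,'k::field) mpoly) \<beta>"
proof -
  have e1: "f * monom y = (\<Sum>b\<in>Poly_Mapping.keys f. Poly_Mapping.single b (Poly_Mapping.lookup f b)) * monom y"
    by (rule arg_cong[where f="\<lambda>z. z * monom y"], rule poly_decomp)
  have e2: "(\<Sum>b\<in>Poly_Mapping.keys f. Poly_Mapping.single b (Poly_Mapping.lookup f b)) * monom y
       = (\<Sum>b\<in>Poly_Mapping.keys f. Poly_Mapping.single (b + y) (Poly_Mapping.lookup f b))"
    by (simp add: sum_distrib_right monom_def mult_single)
  have "Poly_Mapping.lookup (f * monom y) (\<beta> + y)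
      = (\<Sum>b\<in>Poly_Mapping.keys f. if b = \<beta> then Poly_Mapping.lookup f b else 0)"
    unfolding e1 e2 lookup_sum by (rule sum.cong) (auto simp: lookup_single when_def)
  also have "\<dots> = Poly_Mapping.lookup f \<beta>"
    by (subst sum.delta) (auto simp: in_keys_iff)
  finally show ?thesis .
qed

lemma colon_MI: "ideal_colon (MI X) (MI Y :: ('n,'k::field) mpoly set)
   = {f. Poly_Mapping.keys f \<subseteq> {v. \<forall>y\<in>up Y. v + y \<in> up X}}"
proof (rule set_eqI, rule iffI)
  fix f :: "('n,'k) mpoly"
  assume f: "f \<in> ideal_colon (MI X) (MI Y)"
  show "f \<in> {f. Poly_Mapping.keys f \<subseteq> {v. \<forall>y\<in>up Y. v + y \<in> up X}}"
  proof (intro CollectI subsetI ballI)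
    fix \<beta> y assume b: "\<beta> \<in> Poly_Mapping.keys f" and y: "y \<in> up Y"
    have "(monom y :: ('n,'k) mpoly) \<in> MI Y" using y by (simp add: monom_MI_iff)
    then have "f * monom y \<in> MI X" using f unfolding ideal_colon_def by blast
    moreover have "\<beta> + y \<in> Poly_Mapping.keys (f * monom y)"
      using b by (simp add: in_keys_iff lookup_mult_monom)
    ultimately show "\<beta> + y \<in> up X" using keys_MI by blast
  qed
next
  fix f :: "('n,'k) mpoly"
  assume f: "f \<in> {f. Poly_Mapping.keys f \<subseteq> {v. \<forall>y\<in>up Y. v + y \<in> up X}}"
  show "f \<in> ideal_colon (MI X) (MI Y)"
    unfolding ideal_colon_def
  proof (intro CollectI ballI)
    fix j :: "('n,'k) mpoly" assume j: "j \<in> MI Y"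
    have "Poly_Mapping.keys (f * j) \<subseteq> up X"
    proof
      fix \<gamma> assume "\<gamma> \<in> Poly_Mapping.keys (f * j)"
      then have "\<gamma> \<in> {a + b |a b. a \<in> Poly_Mapping.keys f \<and> b \<in> Poly_Mapping.keys j}"
        using keys_mult[of f j] by blast
      then obtain a b where ab: "\<gamma> = a + b" "a \<in> Poly_Mapping.keys f" "b \<in> Poly_Mapping.keys j" by blast
      have "b \<in> up Y" using ab(3) keys_MI[OF j] by blast
      then show "\<gamma> \<in> up X" using ab f by blast
    qed
    then show "f * j \<in> MI X" by (rule MI_keys)
  qed
qed

context goodI
begin

definition C :: "nat \<Rightarrow> ('n \<Rightarrow>\<^sub>0 nat) set" where
  "C k = {v. \<forall>y\<in>U k. v + y \<in> U (Suc k)}"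

lemma RR_eq: "ratliff_rush I = {f. \<exists>k. Poly_Mapping.keys f \<subseteq> C k}"
proof -
  have "ideal_colon (ideal_pow I (k + 1)) (ideal_pow I k) = {f. Poly_Mapping.keys f \<subseteq> C k}" for k
    unfolding pow_I colon_MI C_def UU_def by simp
  then show ?thesis unfolding ratliff_rush_def by auto
qed

lemma C_mono: "C k \<subseteq> C (Suc k)"
proof
  fix v assume v: "v \<in> C k"
  show "v \<in> C (Suc k)" unfolding C_def
  proof (intro CollectI ballI)
    fix y assume "y \<in> U (Suc k)"
    then obtain p where p: "p \<in> pw S (Suc k)" "exp_le p y" unfolding UU_def up_def by blast
    then obtain s p' where sp: "s \<in> S" "p' \<in> pw S k" "p = s + p'" by (auto simp: sumset_def)
    have "p' \<in> U k" using sp(2) unfolding UU_def by (rule up_self)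
    then have "v + p' \<in> U (Suc k)" using v unfolding C_def by blast
    moreover have "s \<in> U (Suc 0)" using sp(1) by (simp add: UU_Suc0 up_self)
    ultimately have "s + (v + p') \<in> U (Suc 0 + Suc k)" by (intro UU_add)
    moreover have "exp_le (s + (v + p')) (v + y)"
      using exp_le_add[OF exp_le_refl[of v] p(2)] sp(3) by (simp add: algebra_simps)
    ultimately show "v + y \<in> U (Suc (Suc k))" using UU_up by simp
  qed
qed

lemma C_mono_le: "k \<le> k' \<Longrightarrow> C k \<subseteq> C k'"
  using lift_Suc_mono_le[of C, OF C_mono] by blast

lemma C_fin: "finite A \<Longrightarrow> A \<subseteq> (\<Union>k. C k) \<Longrightarrow> \<exists>k. A \<subseteq> C k"
proof (induction A rule: finite_induct)
  case empty then show ?case by simp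
next
  case (insert x A)
  then obtain k1 k2 where "x \<in> C k1" "A \<subseteq> C k2" by blast
  then have "insert x A \<subseteq> C (max k1 k2)" using C_mono_le[of k1 "max k1 k2"] C_mono_le[of k2 "max k1 k2"] by auto
  then show ?case by blast
qed

lemma RR_eq2: "ratliff_rush I = {f. Poly_Mapping.keys f \<subseteq> (\<Union>k. C k)}"
proof (rule set_eqI)
  fix f :: "('n,'k) mpoly"
  show "f \<in> ratliff_rush I \<longleftrightarrow> f \<in> {f. Poly_Mapping.keys f \<subseteq> (\<Union>k. C k)}"
  proof
    assume "f \<in> ratliff_rush I"
    then obtain k where "Poly_Mapping.keys f \<subseteq> C k" unfolding RR_eq by blast
    then show "f \<in> {f. Poly_Mapping.keys f \<subseteq> (\<Union>k. C k)}" by blast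
  next
    assume "f \<in> {f. Poly_Mapping.keys f \<subseteq> (\<Union>k. C k)}"
    then have "Poly_Mapping.keys f \<subseteq> (\<Union>k. C k)" by simp
    then obtain k where "Poly_Mapping.keys f \<subseteq> C k" using C_fin[OF finite_keys] by blast
    then show "f \<in> ratliff_rush I" unfolding RR_eq by blast
  qed
qed

definition F :: "('n \<Rightarrow>\<^sub>0 nat) set" where "F = U (Suc 0) \<inter> {u. \<forall>j. Poly_Mapping.lookup u j \<le> dd j}"

lemma finite_F: "finite F"
  unfolding F_def by (rule finite_subset[OF _ finite_bounded[of dd]]) auto

lemma F_U: "F \<subseteq> U (Suc 0)" unfolding F_def by blast

lemma clip: assumes "s \<in> U (Suc 0)" shows "\<exists>s'\<in>F. exp_le s' s"
proof (cases "\<forall>j. Poly_Mapping.lookup s j \<le> dd j")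
  case True then show ?thesis using assms unfolding F_def by (intro bexI[of _ s]) auto
next
  case False
  then obtain j where j: "dd j < Poly_Mapping.lookup s j" by (auto simp: not_le)
  have "Poly_Mapping.single j (dd j) \<in> F" unfolding F_def using dd_in
    by (auto simp: lookup_single when_def)
  moreover have "exp_le (Poly_Mapping.single j (dd j)) s"
    using j unfolding exp_le_def by (auto simp: lookup_single when_def)
  ultimately show ?thesis by blast
qed

lemma pw_mset: "p \<in> pw S k \<Longrightarrow> \<exists>A. size A = k \<and> set_mset A \<subseteq> F \<and> exp_le (sum_mset A) p"
proof (induction k arbitrary: p)
  case 0 then show ?case by (intro exI[of _ "{#}"]) auto
next
  case (Suc k)
  then obtain s p' where sp: "s \<in> S" "p' \<in> pw S k" "p = s + p'" by (auto simp: sumset_def)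
  obtain A where A: "size A = k" "set_mset A \<subseteq> F" "exp_le (sum_mset A) p'" using Suc.IH sp(2) by blast
  have "s \<in> U (Suc 0)" using sp(1) by (simp add: UU_Suc0 up_self)
  then obtain s' where s': "s' \<in> F" "exp_le s' s" using clip by blast
  show ?case
    using A s' sp(3) by (intro exI[of _ "add_mset s' A"]) (auto simp: exp_le_add)
qed

lemma mset_U: "set_mset A \<subseteq> U (Suc 0) \<Longrightarrow> sum_mset A \<in> U (size A)"
proof (induction A)
  case empty then show ?case by (simp add: UU_zero)
next
  case (add x A)
  then have "x + sum_mset A \<in> U (Suc 0 + size A)" by (intro UU_add) auto
  then show ?case by simp
qed

lemma sum_rep: "sum_mset (replicate_mset n u) = rep u n"
  by (induction n) auto

definition pt :: "('n \<Rightarrow> nat) \<Rightarrow> ('n \<Rightarrow>\<^sub>0 nat)" where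
  "pt m = (\<Sum>j\<in>UNIV. Poly_Mapping.single j (m j * dd j))"

lemma lookup_pt: "Poly_Mapping.lookup (pt m) k = m k * dd k"
proof -
  have "Poly_Mapping.lookup (pt m) k = (\<Sum>j\<in>UNIV. if j = k then m k * dd k else 0)"
    unfolding pt_def lookup_sum by (rule sum.cong) (auto simp: lookup_single when_def)
  also have "\<dots> = m k * dd k" by (subst sum.delta) auto
  finally show ?thesis .
qed

lemma pt_U: "pt m \<in> U (sum m UNIV)"
  unfolding pt_def by (rule UU_sum) (auto intro: single_t_U)

lemma Kpush: assumes "v \<in> K i T" "T \<le> m i" shows "v + pt m \<in> U (Suc (sum m UNIV))"
proof -
  define m' where "m' = m(i := m i - T)"
  have e1: "pt m = Poly_Mapping.single i (T * dd i) + pt m'"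
  proof (rule poly_mapping_eqI)
    fix k show "Poly_Mapping.lookup (pt m) k = Poly_Mapping.lookup (Poly_Mapping.single i (T * dd i) + pt m') k"
      using assms(2) by (cases "k = i") (auto simp: lookup_pt lookup_add lookup_single m'_def diff_mult_distrib)
  qed
  have "sum m' (UNIV - {i}) = sum m (UNIV - {i})" by (rule sum.cong) (auto simp: m'_def)
  then have e2: "sum m UNIV = T + sum m' UNIV"
    using sum.remove[of UNIV i m] sum.remove[of UNIV i m'] assms(2) by (simp add: m'_def)
  have "(v + Poly_Mapping.single i (T * dd i)) + pt m' \<in> U (Suc T + sum m' UNIV)"
    using assms(1) unfolding K_def by (intro UU_add pt_U) auto
  then show ?thesis using e1 e2 by (simp add: add.assoc)
qed

lemma main_eq: "(\<Union>k. C k) = (\<Inter>i. K i (qq i))"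
proof
  show "(\<Union>k. C k) \<subseteq> (\<Inter>i. K i (qq i))"
  proof
    fix v assume "v \<in> (\<Union>k. C k)"
    then obtain k where k: "v \<in> C k" by blast
    show "v \<in> (\<Inter>i. K i (qq i))"
    proof
      fix i
      define t where "t = max k (qq i)"
      have "v \<in> C t" using k C_mono_le[of k t] unfolding t_def by auto
      then have "v + Poly_Mapping.single i (t * dd i) \<in> U (Suc t)" using single_t_U unfolding C_def by blast
      then have "v \<in> K i t" unfolding K_def by blast
      moreover have "K i t = K i (qq i)" using qq_prop[of i t] unfolding t_def by simp
      ultimately show "v \<in> K i (qq i)" by simp
    qed
  qed
next
  show "(\<Inter>i. K i (qq i)) \<subseteq> (\<Union>k. C k)"
  proof
    fix v assume v: "v \<in> (\<Inter>i. K i (qq i))"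
    define T where "T = Suc (Max (range qq))"
    have vK: "v \<in> K i T" for i
    proof -
      have le: "qq i \<le> Max (range qq)" by (rule Max_ge) auto
      have "K i T = K i (qq i)" using qq_prop[of i T] le unfolding T_def by simp
      then show ?thesis using v by simp
    qed
    define M where "M = T * LL"
    define kk where "kk = card F * M + 1"
    have "v \<in> C kk" unfolding C_def
    proof (intro CollectI ballI)
      fix y assume "y \<in> U kk"
      then obtain p where p: "p \<in> pw S kk" "exp_le p y" unfolding UU_def up_def by blast
      then obtain A where A: "size A = kk" "set_mset A \<subseteq> F" "exp_le (sum_mset A) p"
        using pw_mset by blast
      have "\<exists>u\<in>F. M \<le> count A u"
      proof (rule ccontr)
        assume "\<not> (\<exists>u\<in>F. M \<le> count A u)"
        then have lt: "\<And>u. u \<in> F \<Longrightarrow> count A u \<le> M" by (meson not_le less_imp_le)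
        have "size A = sum (count A) (set_mset A)" by (rule size_multiset_overloaded_eq)
        also have "\<dots> = sum (count A) F"
          by (rule sum.mono_neutral_left[OF finite_F A(2)]) (auto simp: not_in_iff)
        also have "\<dots> \<le> sum (\<lambda>_. M) F" by (rule sum_mono) (rule lt)
        also have "\<dots> = card F * M" by simp
        finally show False using A(1) unfolding kk_def by simp
      qed
      then obtain u where u: "u \<in> F" "M \<le> count A u" by blast
      define B where "B = A - replicate_mset M u"
      have sub: "replicate_mset M u \<subseteq># A" using count_le_replicate_mset_subset_eq[THEN iffD1, OF u(2)] .
      have AB: "A = replicate_mset M u + B"
        unfolding B_def by (rule subset_mset.add_diff_inverse[OF sub, symmetric])
      have sB: "size B = kk - M" using A(1) AB by simp
      have "set_mset B \<subseteq> F" using A(2) AB by auto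
      then have "set_mset B \<subseteq> U (Suc 0)" using F_U by blast
      then have BU: "sum_mset B \<in> U (kk - M)" using mset_U sB by metis
      have uU: "u \<in> U (Suc 0)" using u(1) F_U by blast
      define c where "c j = Poly_Mapping.lookup u j * wt j" for j
      define m where "m j = T * c j" for j
      have psic: "psi u = sum c UNIV" unfolding psi_def c_def by simp
      have "LL \<le> psi u" using uU by (rule psi_S)
      have "\<exists>i. c i \<noteq> 0"
      proof (rule ccontr)
        assume "\<not> (\<exists>i. c i \<noteq> 0)"
        then have "sum c UNIV = 0" by simp
        then show False using \<open>LL \<le> psi u\<close> LL_pos psic by simp
      qed
      then obtain i where "c i \<noteq> 0" by blast
      then have Tm: "T \<le> m i" unfolding m_def by simp
      have ptm: "pt m = rep u M"
      proof (rule poly_mapping_eqI)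
        fix k
        have "m k * dd k = T * Poly_Mapping.lookup u k * (dd k * wt k)" unfolding m_def c_def by simp
        then show "Poly_Mapping.lookup (pt m) k = Poly_Mapping.lookup (rep u M) k"
          by (simp add: lookup_pt lookup_rep M_def dd_wt)
      qed
      have "sum m UNIV = T * psi u" unfolding m_def psic by (simp add: sum_distrib_left)
      then have "v + rep u M \<in> U (Suc (T * psi u))" using Kpush[where v=v and i=i and T=T and m=m, OF vK[of i] Tm] ptm by simp
      moreover have "Suc M \<le> Suc (T * psi u)" unfolding M_def using \<open>LL \<le> psi u\<close> by simp
      ultimately have "v + rep u M \<in> U (Suc M)" using UU_anti by blast
      then have "(v + rep u M) + sum_mset B \<in> U (Suc M + (kk - M))" using BU by (rule UU_add)
      moreover have "M \<le> kk"
      proof -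
        have "F \<noteq> {}" using u(1) by blast
        then have "card F \<ge> 1" using finite_F by (simp add: Suc_le_eq card_gt_0_iff)
        then have "1 * M \<le> card F * M" by (rule mult_le_mono1)
        then show ?thesis unfolding kk_def by linarith
      qed
      ultimately have in1: "(v + rep u M) + sum_mset B \<in> U (Suc kk)" by simp
      have "(v + rep u M) + sum_mset B = v + sum_mset A" using AB by (simp add: sum_rep add.assoc)
      moreover have "exp_le (v + sum_mset A) (v + y)"
        using exp_le_trans[OF A(3) p(2)] by (intro exp_le_add) auto
      ultimately have in2: "v + sum_mset A \<in> U (Suc kk)" "exp_le (v + sum_mset A) (v + y)" using in1 by simp_all
      show "v + y \<in> U (Suc kk)" by (rule UU_up[OF in2])
    qed
    then show "v \<in> (\<Union>k. C k)" by blast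
  qed
qed

end

theorem mainTheorem10:
  fixes I :: "('n::finite, 'k::field) mpoly set"
  assumes "good I"
  shows "(\<forall>i. \<exists>q. \<forall>t\<ge>q. Ia I (unitv t i) = Ia I (unitv q i))
       \<and> ratliff_rush I =
           (\<Inter>i. Ia I (unitv (LEAST q. \<forall>t\<ge>q. Ia I (unitv t i) = Ia I (unitv q i)) i))"
proof -
  obtain S where IS: "I = ideal_gen (monom ` S)"
    using assms unfolding good_def monomial_ideal_def by blast
  interpret goodI I S using assms IS by unfold_locales (simp_all add: MI_def)
  have Ia_iff: "Ia I (unitv t i) = Ia I (unitv q i) \<longleftrightarrow> K i t = K i q" for t q i
    by (simp add: Ia_eq MI_eq_iff K_eq)
  have L: "(LEAST q. \<forall>t\<ge>q. Ia I (unitv t i) = Ia I (unitv q i)) = qq i" for i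
    unfolding qq_def Ia_iff ..
  have "(\<Inter>i. Ia I (unitv (qq i) i)) = {f. Poly_Mapping.keys f \<subseteq> (\<Inter>i. K i (qq i))}"
    by (auto simp: Ia_eq MI_iff K_eq) blast+
  then have "ratliff_rush I = (\<Inter>i. Ia I (unitv (qq i) i))"
    by (simp add: RR_eq2 main_eq)
  then show ?thesis using K_stable Ia_iff L by simp
qed

end
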